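(* Let $r$ be an odd positive integer, and let $n=2p_1^{\alpha_1}p_2^{\alpha_2}\cdots p_s^{\alpha_s}$ with $s\ge 1$, where $p_1<p_2<\cdots<p_s$ are odd primes and $\alpha_1,\ldots,\alpha_s$ are positive integers. Then $n\in G_r$ if and only if $n+r$ is composite and $p_s-r\neq 2p_1^{\alpha_1}p_2^{\alpha_2}\cdots p_{s-1}^{\alpha_{s-1}}$.
   Context: For a positive integer $r$, the $r$-th Schemmel totient function $S_r:\mathbb{N}\to\mathbb{N}_0$ is the multiplicative arithmetic function (so $S_r(1)=1$ and $S_r(ab)=S_r(a)S_r(b)$ for coprime $a,b$) defined on prime powers by $S_r(p^{\alpha})=0$ if $p\le r$ and $S_r(p^\alpha)=p^{\alpha-1}(p-r)$ if $p>r$, for all primes $p$ and positive integers $\alpha$. $G_r$ denotes the set of positive integers not in the range of $S_r$. For $s=1$ the empty product $p_1^{\alpha_1}\cdots p_{s-1}^{\alpha_{s-1}}$ equals $1$. *)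

theory Defs
  imports "HOL-Computational_Algebra.Primes"
begin

text \<open>The r-th Schemmel totient function, multiplicative, on prime powers
  S_r(p^a) = 0 if p \<le> r and p^(a-1)(p-r) otherwise; S_r(1) = 1.
  (Value at 0 is irrelevant; the domain is the positive integers.)\<close>
definition schemmel :: "nat \<Rightarrow> nat \<Rightarrow> nat" where
  "schemmel r n = (\<Prod>p\<in>prime_factors n.
      if p \<le> r then 0 else p ^ (multiplicity p n - 1) * (p - r))"

definition G :: "nat \<Rightarrow> nat set" where
  "G r = {m. m > 0 \<and> \<not> (\<exists>k>0. schemmel r k = m)}"

definition composite :: "nat \<Rightarrow> bool" where
  "composite m \<longleftrightarrow> m > 1 \<and> \<not> prime m"

end

theory Submission
  imports Defs
begin

lemma schem_pow:
  assumes q: "prime (q::nat)" and qr: "q > r" and b: "b \<ge> 1"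
  shows "schemmel r (q^b) = q^(b-1)*(q-r)"
proof -
  have "prime_factors (q^b) = {q}"
  proof -
    have ne: "q^b \<noteq> 0" using q by (simp add: prime_gt_0_nat)
    have "{p. prime p \<and> p dvd q^b} = {q}"
    proof safe
      fix x assume "prime x" "x dvd q^b"
      then have "x dvd q" using prime_dvd_power by blast
      then show "x = q" using \<open>prime x\<close> q primes_dvd_imp_eq by blast
    next
      show "prime q" by fact
      show "q dvd q^b" using b by (simp add: dvd_power)
    qed
    then show ?thesis using prime_factors_dvd[OF ne] by simp
  qed
  moreover have "multiplicity q (q^b) = b" using q by simp
  ultimately show ?thesis using qr unfolding schemmel_def by simp
qed

lemma schem_range:
  fixes r n k p0 :: nat
  assumes r: "odd r" and p0: "prime p0" "odd p0" "p0 dvd n"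
    and n4: "\<not> 4 dvd n" and npos: "n > 0"
    and k: "k > 0" and sk: "schemmel r k = n"
  shows "\<exists>q b. prime q \<and> odd q \<and> q > r \<and> b \<ge> 1 \<and> n = q^(b-1)*(q-r)"
proof -
  define f where "f = (\<lambda>p. if p \<le> r then 0 else p ^ (multiplicity p k - 1) * (p - r))"
  define PF where "PF = prime_factors k"
  have fin: "finite PF" unfolding PF_def by simp
  have prodn: "prod f PF = n" using sk unfolding schemmel_def f_def PF_def by simp
  have nz: "\<And>p. p \<in> PF \<Longrightarrow> f p \<noteq> 0" using prodn npos fin by (metis prod_zero_iff less_irrefl)
  have gr: "\<And>p. p \<in> PF \<Longrightarrow> p > r" using nz unfolding f_def by (metis not_less)
  have ev: "\<And>p. p \<in> PF \<Longrightarrow> odd p \<Longrightarrow> 2 dvd f p"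
  proof -
    fix p assume "p \<in> PF" "odd p"
    then have "p > r" using gr by blast
    then have "even (p - r)" using \<open>odd p\<close> r by (simp add: even_diff_nat)
    then show "2 dvd f p" using \<open>p > r\<close> unfolding f_def by simp
  qed
  define Od where "Od = {p\<in>PF. odd p}"
  define E where "E = {p\<in>PF. even p}"
  have PFu: "PF = E \<union> Od" unfolding E_def Od_def by blast
  have disj: "E \<inter> Od = {}" unfolding E_def Od_def by blast
  have finE: "finite E" "finite Od" using fin unfolding E_def Od_def by auto
  have split: "prod f PF = prod f E * prod f Od"
    using PFu disj finE prod.union_disjoint by metis
  have E2: "E \<subseteq> {2}"
  proof
    fix x assume "x \<in> E"
    then have "prime x" "even x" unfolding E_def PF_def by auto
    then have "x = 2" using primes_dvd_imp_eq[OF two_is_prime_nat] by (metis dvd_def)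
    then show "x \<in> {2}" by simp
  qed
  have "\<exists>j. prod f E = 2^j"
  proof (cases "E = {}")
    case True then show ?thesis by (intro exI[of _ 0]) simp
  next
    case False
    then have E: "E = {2}" using E2 by blast
    then have "2 > r" using gr unfolding E_def by auto
    then have "r = 1" using r by (cases r) auto
    then show ?thesis using E unfolding f_def by auto
  qed
  then obtain j where j: "prod f E = 2^j" by blast
  have n_eq: "n = 2^j * prod f Od" using split prodn j by simp
  have "\<exists>q. Od = {q}"
  proof (cases "Od = {}")
    case True
    then have "n = 2^j" using n_eq by simp
    then have "p0 dvd 2" using p0 prime_dvd_power by metis
    then have "p0 = 2" using p0 primes_dvd_imp_eq two_is_prime_nat by blast
    then show ?thesis using p0 by simp
  next
    case False
    then obtain q where qO: "q \<in> Od" by blast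
    show ?thesis
    proof (cases "Od = {q}")
      case True then show ?thesis by blast
    next
      case False
      then obtain q2 where q2: "q2 \<in> Od" "q2 \<noteq> q" using qO by blast
      have sub: "{q, q2} \<subseteq> Od" using qO q2 by blast
      have "prod f {q, q2} dvd prod f Od" using prod_dvd_prod_subset[OF finE(2) sub] .
      moreover have "prod f {q, q2} = f q * f q2" using q2 by simp
      moreover have "4 dvd f q * f q2"
      proof -
        have "2 dvd f q" "2 dvd f q2" using ev qO q2 unfolding Od_def by auto
        then show ?thesis by (metis mult_dvd_mono numeral_Bit0_eq_double mult_2)
      qed
      ultimately have "4 dvd n" using n_eq by (metis dvd_trans dvd_mult)
      then show ?thesis using n4 by blast
    qed
  qed
  then obtain q where qO: "Od = {q}" by blast
  have qPF: "q \<in> PF" "odd q" using qO unfolding Od_def by auto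
  have n_eq2: "n = 2^j * f q" using n_eq qO by simp
  have "2 dvd f q" using ev qPF by blast
  have j0: "j = 0"
  proof (rule ccontr)
    assume "j \<noteq> 0"
    then have "2 dvd (2::nat)^j" by simp
    then have "2*2 dvd 2^j * f q" using \<open>2 dvd f q\<close> by (metis mult_dvd_mono)
    then show False using n4 n_eq2 by simp
  qed
  have qprime: "prime q" using qPF unfolding PF_def by auto
  have qr: "q > r" using gr qPF by blast
  have "multiplicity q k > 0" using qPF unfolding PF_def by (simp add: prime_factors_multiplicity)
  then show ?thesis using qprime qPF qr n_eq2 j0 unfolding f_def
    by (intro exI[of _ q] exI[of _ "multiplicity q k"]) auto
qed



theorem theorem3p1:
  fixes r s n :: nat and p \<alpha> :: "nat \<Rightarrow> nat"
  assumes "r > 0" and "odd r"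
    and "s \<ge> 1"
    and "\<And>i. i < s \<Longrightarrow> prime (p i) \<and> odd (p i)"
    and "\<And>i j. i < j \<Longrightarrow> j < s \<Longrightarrow> p i < p j"
    and "\<And>i. i < s \<Longrightarrow> \<alpha> i > 0"
    and "n = 2 * (\<Prod>i<s. p i ^ \<alpha> i)"
  shows "n \<in> G r \<longleftrightarrow>
    composite (n + r) \<and>
    int (p (s - 1)) - int r \<noteq> int (2 * (\<Prod>i<s - 1. p i ^ \<alpha> i))"
proof -
  note pr = assms(4) and mono = assms(5)
  obtain t where st: "s = Suc t" using assms(3) by (cases s) auto
  define P where "P = (\<Prod>i<s. p i ^ \<alpha> i)"
  define P' where "P' = (\<Prod>i<t. p i ^ \<alpha> i)"
  have PP: "P = P' * p t ^ \<alpha> t" unfolding P_def P'_def st by simp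
  have nP: "n = 2 * P" using assms(7) P_def by simp
  have ts: "s - 1 = t" using st by simp
  have pt: "prime (p t)" "odd (p t)" using pr[of t] st by auto
  have P'pos: "P' > 0" unfolding P'_def using pr st
    by (intro prod_pos) (auto intro: prime_gt_0_nat)
  have Ppos: "P > 0" using PP P'pos pt by (simp add: prime_gt_0_nat)
  have noq: "\<And>q. prime q \<Longrightarrow> q dvd P \<Longrightarrow> \<exists>i<s. q = p i"
  proof -
    fix q :: nat assume q: "prime q" "q dvd P"
    then obtain i where "i < s" "q dvd p i ^ \<alpha> i" unfolding P_def using prime_dvd_prod_iff[of "{..<s}" q] by auto
    then have "q dvd p i" using q prime_dvd_power by blast
    then have "q = p i" using q pr \<open>i < s\<close> primes_dvd_imp_eq by blast
    then show "\<exists>i<s. q = p i" using \<open>i < s\<close> by blast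
  qed
  have Podd: "odd P"
  proof
    assume "2 dvd P"
    then obtain i where "i < s" "2 = p i" using noq two_is_prime_nat by blast
    then show False using pr[of i] by simp
  qed
  have n4: "\<not> 4 dvd n"
  proof
    assume "4 dvd n"
    then have "2 * 2 dvd 2 * P" using nP by simp
    then have "2 dvd P" using nat_mult_dvd_cancel1[of 2 2 P] by simp
    then show False using Podd by simp
  qed
  have npos: "n > 0" using nP Ppos by simp
  have ptdvd: "p t dvd n" unfolding nP PP using assms(6) st
    by (simp add: dvd_power)
  define Q where "Q = (\<exists>q b. prime q \<and> odd q \<and> q > r \<and> b \<ge> 1 \<and> n = q^(b-1)*(q-r))"
  have rangeQ: "(\<exists>k>0. schemmel r k = n) \<longleftrightarrow> Q"
  proof
    assume "\<exists>k>0. schemmel r k = n"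
    then obtain k where "k > 0" "schemmel r k = n" by blast
    then show Q unfolding Q_def using schem_range[OF assms(2) pt ptdvd n4 npos] by blast
  next
    assume Q
    then obtain q b where qb: "prime q" "q > r" "b \<ge> 1" "n = q^(b-1)*(q-r)" unfolding Q_def by blast
    then have "schemmel r (q^b) = n" using schem_pow by simp
    moreover have "q^b > 0" using qb by (simp add: prime_gt_0_nat)
    ultimately show "\<exists>k>0. schemmel r k = n" by blast
  qed
  have QQ: "Q \<longleftrightarrow> prime (n + r) \<or> int (p t) - int r = int (2 * P')"
  proof
    assume Q
    then obtain q b where qb: "prime q" "odd q" "q > r" "b \<ge> 1" "n = q^(b-1)*(q-r)" unfolding Q_def by blast
    show "prime (n + r) \<or> int (p t) - int r = int (2 * P')"
    proof (cases "b = 1")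
      case True
      then have "q = n + r" using qb by simp
      then show ?thesis using qb by simp
    next
      case False
      then have b2: "b - 1 > 0" using qb by simp
      then have "q dvd n" using qb by (simp add: dvd_power)
      then have "q dvd 2 * P" using nP by simp
      moreover have "\<not> q dvd 2"
      proof
        assume "q dvd 2"
        then have "q = 2" using qb primes_dvd_imp_eq two_is_prime_nat by blast
        then show False using qb by simp
      qed
      ultimately have "q dvd P" using qb prime_dvd_mult_iff by blast
      then obtain i where i: "i < s" "q = p i" using noq qb by blast
      have it: "i = t"
      proof (rule ccontr)
        assume "i \<noteq> t"
        then have "i < t" using i st by simp
        then have lt: "p i < p t" using mono st by simp
        have "p t dvd q^(b-1)*(q-r)" using ptdvd qb by simp
        moreover have "\<not> p t dvd q^(b-1)"
        proof
          assume "p t dvd q^(b-1)"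
          then have "p t dvd q" using pt prime_dvd_power by blast
          then have "p t = q" using pt qb primes_dvd_imp_eq by blast
          then show False using lt i by simp
        qed
        ultimately have "p t dvd q - r" using pt prime_dvd_mult_iff by blast
        then have "p t \<le> q - r" using qb by (simp add: dvd_imp_le)
        then show False using lt i qb by simp
      qed
      have qt: "q = p t" using i it by simp
      have eq: "q^(\<alpha> t) * (2 * P') = q^(b-1) * (q - r)" using qb nP PP qt by (simp add: ac_simps)
      have nd1: "\<not> q dvd q - r"
      proof
        assume "q dvd q - r"
        then have "q \<le> q - r" using qb by (simp add: dvd_imp_le)
        then show False using qb assms(1) by simp
      qed
      have nd2: "\<not> q dvd 2 * P'"
      proof
        assume "q dvd 2 * P'"
        then have "q dvd P'" using \<open>\<not> q dvd 2\<close> qb prime_dvd_mult_iff by blast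
        then obtain j where "j < t" "q dvd p j ^ \<alpha> j" unfolding P'_def using prime_dvd_prod_iff[of "{..<t}" q] qb by auto
        then have "q dvd p j" using qb prime_dvd_power by blast
        moreover have "prime (p j)" using pr[of j] \<open>j < t\<close> st by simp
        ultimately have "q = p j" using qb primes_dvd_imp_eq by blast
        moreover have "p j < p t" using mono \<open>j < t\<close> st by simp
        ultimately show False using qt by simp
      qed
      have qpe: "prime_elem q" using qb by simp
      have "multiplicity q (q^(\<alpha> t) * (2 * P')) = \<alpha> t"
        using prime_elem_multiplicity_mult_distrib[OF qpe] nd2 P'pos qb
        by (simp add: not_dvd_imp_multiplicity_0 prime_gt_0_nat)
      moreover have "multiplicity q (q^(b-1) * (q - r)) = b - 1"
        using prime_elem_multiplicity_mult_distrib[OF qpe] nd1 qb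
        by (simp add: not_dvd_imp_multiplicity_0 prime_gt_0_nat)
      ultimately have "\<alpha> t = b - 1" using eq by simp
      then have "2 * P' = q - r" using eq qb by (simp add: prime_gt_0_nat)
      then show ?thesis using qt qb by simp
    qed
  next
    assume "prime (n + r) \<or> int (p t) - int r = int (2 * P')"
    then show Q
    proof
      assume h: "prime (n + r)"
      have "odd (n + r)" using nP assms(2) by simp
      then show Q unfolding Q_def using h npos
        by (intro exI[of _ "n + r"] exI[of _ 1]) auto
    next
      assume h: "int (p t) - int r = int (2 * P')"
      then have gt: "p t > r" using P'pos by simp
      have d: "p t - r = 2 * P'" using h gt by simp
      have "n = p t ^ \<alpha> t * (p t - r)" using d nP PP by simp
      then show Q unfolding Q_def using pt gt
        by (intro exI[of _ "p t"] exI[of _ "\<alpha> t + 1"]) auto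
    qed
  qed
  have "n \<in> G r \<longleftrightarrow> \<not> (\<exists>k>0. schemmel r k = n)" unfolding G_def using npos by blast
  then have Gi: "n \<in> G r \<longleftrightarrow> \<not> Q" using rangeQ by blast
  have comp: "composite (n + r) \<longleftrightarrow> \<not> prime (n + r)" unfolding composite_def using npos assms(1) by simp
  show ?thesis unfolding Gi comp QQ ts P'_def[symmetric] by blast
qed

end
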